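(* In the setting described in the context, suppose $T$ and $A$ are irreducible and $r_A>1$. Then for $1<|z|<r_A$, $\det(I-\Gamma_A^*(z))=0$ if and only if $\det(I-R^*(z))=0$.
   Context: Let $M_0,M$ be positive integers. Consider a discrete-time Markov chain $\{(X_n,S_n)\}_{n\ge0}$ of M/G/1 type with state space $\{(0,j):1\le j\le M_0\}\cup\{(k,j):k\ge1,1\le j\le M\}$ (level $k$ = states with first coordinate $k$), with transition matrix in lexicographic order \[ T=\begin{pmatrix}B(0)&B(1)&B(2)&\cdots\\ C(0)&A(1)&A(2)&\cdots\\ O&A(0)&A(1)&\cdots\\ O&O&A(0)&\cdots\\ \vdots&\vdots&\vdots&\ddots\end{pmatrix}, \] with nonnegative blocks $A(k)$ ($M\times M$), $B(0)$, $B(k)$ ($k\ge1$), $C(0)$ of compatible sizes; $A=\sum_{k\ge0}A(k)$ stochastic, $B(0)e+\sum_{k\ge1}B(k)e=e$. $A^*(z)=\sum_{k\ge0}z^kA(k)$ with convergence radius $r_A$, $\Gamma_A^*(z)=z^{-1}A^*(z)$. $G$ is the $M\times M$ matrix with $[G]_{i,j}=\Pr[S_{a(k)}=j\mid X_0=k+1,S_0=i]$ ($a(k)=\inf\{n\ge1:X_n=k\}$), the minimal nonnegative solution of $X=\sum_k A(k)X^k$. $U(k)=\sum_{m\ge k+1}A(m)G^{m-k-1}$ ($k\ge0$), $R(k)=U(k)(I-U(0))^{-1}$ ($k\ge1$), $R^*(z)=\sum_{k\ge1}z^kR(k)$. *)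

theory Defs
  imports "HOL-Analysis.Analysis"
begin

text \<open>Square matrices of a fixed size M are rendered as real^'m^'m ('m a finite type with
CARD('m) = M); level-0 blocks use a second finite index type 'n with CARD('n) = M0.
Block B(k) (k >= 1) is M0 x M, i.e. real^'m^'n; C(0) is M x M0, i.e. real^'n^'m.\<close>

primrec mpow :: "real^'m^'m \<Rightarrow> nat \<Rightarrow> real^'m^'m" where
  "mpow X 0 = mat 1"
| "mpow X (Suc k) = X ** mpow X k"

definition nonneg_mat :: "real^'a^'b \<Rightarrow> bool" where
  "nonneg_mat X \<longleftrightarrow> (\<forall>i j. 0 \<le> X $ i $ j)"

definition irreducible_mat :: "real^'m^'m \<Rightarrow> bool" where
  "irreducible_mat X \<longleftrightarrow> (\<forall>i j. \<exists>n. mpow X n $ i $ j > 0)"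

text \<open>States of the M/G/1-type chain: Inl i is (0,i); Inr (k,j) with k >= 1 is (k,j).\<close>
definition valid_state :: "'n + nat \<times> 'm \<Rightarrow> bool" where
  "valid_state s = (case s of Inl _ \<Rightarrow> True | Inr (k, _) \<Rightarrow> 1 \<le> k)"

definition Tmat ::
  "(nat \<Rightarrow> real^'m^'m) \<Rightarrow> real^'n^'n \<Rightarrow> (nat \<Rightarrow> real^'m^'n) \<Rightarrow> real^'n^'m
   \<Rightarrow> 'n + nat \<times> 'm \<Rightarrow> 'n + nat \<times> 'm \<Rightarrow> real" where
  "Tmat A B0 B C0 s t =
    (case (s, t) of
      (Inl i, Inl i') \<Rightarrow> B0 $ i $ i'
    | (Inl i, Inr (l, j')) \<Rightarrow> B l $ i $ j'
    | (Inr (k, j), Inl i') \<Rightarrow> (if k = 1 then C0 $ j $ i' else 0)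
    | (Inr (k, j), Inr (l, j')) \<Rightarrow> (if k \<le> l + 1 then A (l + 1 - k) $ j $ j' else 0))"

definition irreducible_T ::
  "(nat \<Rightarrow> real^'m^'m) \<Rightarrow> real^'n^'n \<Rightarrow> (nat \<Rightarrow> real^'m^'n) \<Rightarrow> real^'n^'m \<Rightarrow> bool" where
  "irreducible_T A B0 B C0 \<longleftrightarrow>
    (\<forall>s t. valid_state s \<longrightarrow> valid_state t \<longrightarrow>
       (s, t) \<in> {(u, v). valid_state u \<and> valid_state v \<and> Tmat A B0 B C0 u v > 0}\<^sup>*)"

definition Astar :: "(nat \<Rightarrow> real^'m^'m) \<Rightarrow> complex \<Rightarrow> complex^'m^'m" where
  "Astar A z = (\<chi> i j. \<Sum>k. z ^ k * complex_of_real (A k $ i $ j))"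

definition GammaAstar :: "(nat \<Rightarrow> real^'m^'m) \<Rightarrow> complex \<Rightarrow> complex^'m^'m" where
  "GammaAstar A z = (\<chi> i j. Astar A z $ i $ j / z)"

definition solves_G :: "(nat \<Rightarrow> real^'m^'m) \<Rightarrow> real^'m^'m \<Rightarrow> bool" where
  "solves_G A X \<longleftrightarrow> nonneg_mat X \<and> summable (\<lambda>k. A k ** mpow X k) \<and> X = (\<Sum>k. A k ** mpow X k)"

definition minimal_G :: "(nat \<Rightarrow> real^'m^'m) \<Rightarrow> real^'m^'m \<Rightarrow> bool" where
  "minimal_G A G \<longleftrightarrow> solves_G A G \<and> (\<forall>X. solves_G A X \<longrightarrow> (\<forall>i j. G $ i $ j \<le> X $ i $ j))"

definition Umat :: "(nat \<Rightarrow> real^'m^'m) \<Rightarrow> real^'m^'m \<Rightarrow> nat \<Rightarrow> real^'m^'m" where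
  "Umat A G k = (\<Sum>n. A (n + k + 1) ** mpow G n)"

definition Rmat :: "(nat \<Rightarrow> real^'m^'m) \<Rightarrow> real^'m^'m \<Rightarrow> nat \<Rightarrow> real^'m^'m" where
  "Rmat A G k = Umat A G k ** matrix_inv (mat 1 - Umat A G 0)"

definition Rstar :: "(nat \<Rightarrow> real^'m^'m) \<Rightarrow> real^'m^'m \<Rightarrow> complex \<Rightarrow> complex^'m^'m" where
  "Rstar A G z = (\<chi> i j. \<Sum>k. z ^ (Suc k) * complex_of_real (Rmat A G (Suc k) $ i $ j))"

end

theory Submission
  imports Defs
begin



definition rs :: "real^'m^'m \<Rightarrow> 'm \<Rightarrow> real" where
  "rs X i = (\<Sum>j\<in>UNIV. X $ i $ j)"

definition sub :: "real^'m^'m \<Rightarrow> bool" where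
  "sub X \<longleftrightarrow> nonneg_mat X \<and> (\<forall>i. rs X i \<le> 1)"

definition mle :: "real^'m^'m \<Rightarrow> real^'m^'m \<Rightarrow> bool" where
  "mle X Y \<longleftrightarrow> (\<forall>i j. X $ i $ j \<le> Y $ i $ j)"

lemma mm_entry: "(X ** Y) $ i $ j = (\<Sum>l\<in>UNIV. X $ i $ l * Y $ l $ j)"
  by (simp add: matrix_matrix_mult_def)

lemma nonneg_mult: "nonneg_mat (X::real^'m^'m) \<Longrightarrow> nonneg_mat (Y::real^'m^'m) \<Longrightarrow> nonneg_mat (X ** Y)"
  unfolding nonneg_mat_def mm_entry by (auto intro!: sum_nonneg)

lemma rs_mult: "rs (X ** Y) i = (\<Sum>l\<in>UNIV. X $ i $ l * rs Y l)"
proof -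
  have "rs (X ** Y) i = (\<Sum>j\<in>UNIV. \<Sum>l\<in>UNIV. X $ i $ l * Y $ l $ j)"
    unfolding rs_def mm_entry ..
  also have "\<dots> = (\<Sum>l\<in>UNIV. \<Sum>j\<in>UNIV. X $ i $ l * Y $ l $ j)"
    by (rule sum.swap)
  also have "\<dots> = (\<Sum>l\<in>UNIV. X $ i $ l * rs Y l)"
    unfolding rs_def by (simp add: sum_distrib_left)
  finally show ?thesis .
qed

lemma sub_entry_le1: assumes "sub X" shows "X $ i $ j \<le> 1"
proof -
  have "X $ i $ j \<le> rs X i" unfolding rs_def
    using assms unfolding sub_def nonneg_mat_def
    by (intro member_le_sum) auto
  then show ?thesis using assms unfolding sub_def by (meson order_trans)
qed

lemma sub_mult: assumes "sub X" "sub Y" shows "sub (X ** Y)"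
proof -
  have "nonneg_mat (X ** Y)" using assms nonneg_mult unfolding sub_def by blast
  moreover have "rs (X ** Y) i \<le> 1" for i
  proof -
    have "rs (X ** Y) i \<le> (\<Sum>l\<in>UNIV. X $ i $ l * 1)" unfolding rs_mult
      using assms unfolding sub_def nonneg_mat_def by (intro sum_mono mult_left_mono) auto
    also have "\<dots> \<le> 1" using assms unfolding sub_def rs_def by simp
    finally show ?thesis .
  qed
  ultimately show ?thesis unfolding sub_def by blast
qed

lemma mpow_nonneg: "nonneg_mat X \<Longrightarrow> nonneg_mat (mpow X n)"
proof (induction n)
  case 0 then show ?case by (auto simp: nonneg_mat_def mat_def)
next
  case (Suc n) then show ?case using nonneg_mult[of X "mpow X n"] by simp
qed

lemma sub_id: "sub (mat 1 :: real^'m^'m)"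
proof -
  have "rs (mat 1 :: real^'m^'m) i = 1" for i
    unfolding rs_def mat_def by (simp add: sum.delta)
  then show ?thesis unfolding sub_def nonneg_mat_def mat_def by auto
qed

lemma mpow_sub: "sub X \<Longrightarrow> sub (mpow X n)"
  by (induction n) (auto intro: sub_mult sub_id)

lemma mpow_add: "mpow X (m + n) = mpow X m ** mpow X n"
  by (induction m) (auto simp: matrix_mul_assoc)

lemma mpow_Suc_right: "mpow X (Suc n) = mpow X n ** X"
  using mpow_add[of X n 1] by simp

lemma mle_mult: assumes "nonneg_mat X" "nonneg_mat Y" "mle X X'" "mle Y Y'"
  shows "mle (X ** Y) (X' ** Y')"
  using assms unfolding mle_def mm_entry nonneg_mat_def
  by (auto intro!: sum_mono mult_mono order_trans[OF _ assms(3)[unfolded mle_def, rule_format]])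

lemma mle_mpow: assumes "nonneg_mat X" "mle X Y" shows "mle (mpow X n) (mpow Y n)"
proof (induction n)
  case 0 then show ?case by (simp add: mle_def)
next
  case (Suc n) then show ?case using mle_mult[OF assms(1) mpow_nonneg[OF assms(1)] assms(2) Suc] by simp
qed

lemma mle_refl: "mle X X" by (simp add: mle_def)

lemma bl_entry: "bounded_linear (\<lambda>x::'a::real_normed_vector^'n^'m. x $ i $ j)"
  using bounded_linear_compose[OF bounded_linear_vec_nth bounded_linear_vec_nth] .

lemma summable_entry: "summable (f::nat \<Rightarrow> 'a::real_normed_vector^'n^'m) \<Longrightarrow> summable (\<lambda>n. f n $ i $ j)"
  using bounded_linear.summable[OF bl_entry] by blast

lemma suminf_entry: "summable (f::nat \<Rightarrow> 'a::real_normed_vector^'n^'m) \<Longrightarrow> (suminf f) $ i $ j = (\<Sum>n. f n $ i $ j)"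
  using bounded_linear.suminf[OF bl_entry] by metis

lemma vec_sums: assumes "\<And>i. (\<lambda>n. f n $ i) sums (a $ i)" shows "f sums a"
  using assms unfolding sums_def by (intro vec_tendstoI) (simp add: sum_component)

lemma mat_sums: assumes "\<And>i j. (\<lambda>n. f n $ i $ j) sums (a $ i $ j)" shows "f sums a"
  by (intro vec_sums) (simp add: assms vec_sums)

lemma summable_from_entries:
  fixes f :: "nat \<Rightarrow> 'a::real_normed_vector^'n^'m"
  assumes "\<And>i j. summable (\<lambda>n. f n $ i $ j)"
  shows "summable f" "(suminf f) $ i $ j = (\<Sum>n. f n $ i $ j)"
proof -
  have "f sums (\<chi> i j. \<Sum>n. f n $ i $ j)"
    by (rule mat_sums) (simp add: summable_sums assms)
  then show "summable f" "(suminf f) $ i $ j = (\<Sum>n. f n $ i $ j)"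
    by (auto simp: sums_iff)
qed




locale mg1 =
  fixes A :: "nat \<Rightarrow> real^'m^'m" and G :: "real^'m^'m"
  assumes A_nonneg: "\<And>k. nonneg_mat (A k)"
    and A_summable: "summable A"
    and A_stoch: "\<And>i. (\<Sum>j\<in>UNIV. (\<Sum>k. A k) $ i $ j) = 1"
    and G_min: "minimal_G A G"
begin

lemma Aent_nonneg: "0 \<le> A k $ i $ j"
  using A_nonneg unfolding nonneg_mat_def by blast

lemma Aent_summable: "summable (\<lambda>k. A k $ i $ j)"
  by (rule summable_entry[OF A_summable])

lemma rsA_summable: "summable (\<lambda>k. rs (A k) i)"
  unfolding rs_def by (intro summable_sum Aent_summable)

lemma rsA_sum: "(\<Sum>k. rs (A k) i) = 1"
proof -
  have "(\<Sum>k. rs (A k) i) = (\<Sum>j\<in>UNIV. \<Sum>k. A k $ i $ j)"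
    unfolding rs_def by (rule suminf_sum) (rule Aent_summable)
  also have "\<dots> = 1" using A_stoch[of i] by (simp add: suminf_entry[OF A_summable])
  finally show ?thesis .
qed

lemma rsA_nonneg: "0 \<le> rs (A k) i"
  unfolding rs_def by (intro sum_nonneg) (simp add: Aent_nonneg)

lemma AP_entry_bounds:
  assumes "sub P" shows "0 \<le> (A k ** P) $ i $ j" "(A k ** P) $ i $ j \<le> rs (A k) i"
proof -
  show "0 \<le> (A k ** P) $ i $ j" using nonneg_mult[OF A_nonneg, of P k] assms
    unfolding sub_def nonneg_mat_def by blast
  show "(A k ** P) $ i $ j \<le> rs (A k) i" unfolding mm_entry rs_def
    using assms sub_entry_le1[OF assms] by (intro sum_mono) (simp add: Aent_nonneg mult_left_le)
qed

lemma AP_rs_le: assumes "sub P" shows "rs (A k ** P) i \<le> rs (A k) i"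
proof -
  have "rs (A k ** P) i \<le> (\<Sum>l\<in>UNIV. A k $ i $ l * 1)" unfolding rs_mult
    using assms unfolding sub_def by (intro sum_mono mult_left_mono) (auto simp: Aent_nonneg)
  then show ?thesis unfolding rs_def by simp
qed

lemma AP_summable_entry:
  assumes "\<And>k. sub (P k)" shows "summable (\<lambda>k. (A k ** P k) $ i $ j)"
  by (rule summable_comparison_test'[OF rsA_summable[of i]])
     (use AP_entry_bounds[OF assms] in auto)

lemma AP_summable:
  assumes "\<And>k. sub (P k)" shows "summable (\<lambda>k. A k ** P k)"
  and "(\<Sum>k. A k ** P k) $ i $ j = (\<Sum>k. (A k ** P k) $ i $ j)"
  using summable_from_entries[OF AP_summable_entry[OF assms]] by auto

lemma AP_rs:
  assumes "\<And>k. sub (P k)"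
  shows "summable (\<lambda>k. rs (A k ** P k) i)" "rs (\<Sum>k. A k ** P k) i = (\<Sum>k. rs (A k ** P k) i)"
proof -
  show "summable (\<lambda>k. rs (A k ** P k) i)" unfolding rs_def
    by (intro summable_sum AP_summable_entry assms)
  have "rs (\<Sum>k. A k ** P k) i = (\<Sum>j\<in>UNIV. \<Sum>k. (A k ** P k) $ i $ j)"
    unfolding rs_def AP_summable(2)[OF assms] ..
  also have "\<dots> = (\<Sum>k. rs (A k ** P k) i)"
    unfolding rs_def by (rule suminf_sum[symmetric]) (rule AP_summable_entry[OF assms])
  finally show "rs (\<Sum>k. A k ** P k) i = (\<Sum>k. rs (A k ** P k) i)" .
qed

lemma AP_sub:
  assumes "\<And>k. sub (P k)" shows "sub (\<Sum>k. A k ** P k)"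
proof -
  have "nonneg_mat (\<Sum>k. A k ** P k)" unfolding nonneg_mat_def AP_summable(2)[OF assms]
    by (auto intro!: suminf_nonneg AP_summable_entry assms AP_entry_bounds)
  moreover have "rs (\<Sum>k. A k ** P k) i \<le> 1" for i
  proof -
    have "(\<Sum>k. rs (A k ** P k) i) \<le> (\<Sum>k. rs (A k) i)"
      by (intro suminf_le AP_rs_le assms AP_rs rsA_summable)
    then show ?thesis using AP_rs(2)[OF assms] rsA_sum by simp
  qed
  ultimately show ?thesis unfolding sub_def by blast
qed

lemma AP_defect:
  assumes "\<And>k. sub (P k)" and "rs (\<Sum>k. A k ** P k) c = 1" and "A m $ c $ c' > 0"
  shows "rs (P m) c' = 1"
proof -
  let ?d = "\<lambda>k. rs (A k) c - rs (A k ** P k) c"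
  have s: "summable ?d" by (intro summable_diff rsA_summable AP_rs assms)
  have "suminf ?d = 0"
    using suminf_diff[OF rsA_summable AP_rs(1)[OF assms(1)]] rsA_sum AP_rs(2)[OF assms(1)] assms(2)
    by simp
  then have "\<forall>k. ?d k = 0" using suminf_eq_zero_iff[OF s] AP_rs_le[OF assms(1)] by simp
  then have "(\<Sum>l\<in>UNIV. A m $ c $ l * (1 - rs (P m) l)) = 0"
    unfolding rs_mult by (simp add: rs_def algebra_simps sum_subtractf)
  moreover have "\<forall>l\<in>UNIV. 0 \<le> A m $ c $ l * (1 - rs (P m) l)"
    using assms(1)[of m] unfolding sub_def by (auto simp: Aent_nonneg)
  ultimately have "A m $ c $ c' * (1 - rs (P m) c') = 0"
    using sum_nonneg_eq_0_iff[of UNIV "\<lambda>l. A m $ c $ l * (1 - rs (P m) l)"] by simp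
  then show ?thesis using assms(3) by simp
qed

lemma AP_pos:
  assumes "\<And>k. sub (P k)" and "A m $ c $ c' > 0" and "P m $ c' $ b > 0"
  shows "(\<Sum>k. A k ** P k) $ c $ b > 0"
proof -
  have "(A m ** P m) $ c $ b \<ge> A m $ c $ c' * P m $ c' $ b"
    unfolding mm_entry using assms(1)[of m]
    by (intro member_le_sum) (auto simp: sub_def nonneg_mat_def Aent_nonneg)
  then have "(A m ** P m) $ c $ b > 0" using assms(2,3) by (smt (verit) mult_pos_pos)
  moreover have s: "summable (\<lambda>k. (A k ** P k) $ c $ b)" by (rule AP_summable_entry[OF assms(1)])
  moreover have nn: "\<And>k. 0 \<le> (A k ** P k) $ c $ b" using AP_entry_bounds(1) assms(1) by blast
  ultimately show ?thesis unfolding AP_summable(2)[OF assms(1)]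
    using suminf_pos_iff[OF s nn] by blast
qed

end



lemma mm_tendsto:
  fixes X Y :: "nat \<Rightarrow> real^'m^'m"
  assumes "\<And>i j. (\<lambda>n. X n $ i $ j) \<longlonglongrightarrow> L $ i $ j" "\<And>i j. (\<lambda>n. Y n $ i $ j) \<longlonglongrightarrow> M $ i $ j"
  shows "(\<lambda>n. (X n ** Y n) $ i $ j) \<longlonglongrightarrow> (L ** M) $ i $ j"
  unfolding mm_entry by (rule tendsto_sum, rule tendsto_mult) (rule assms)+

lemma mpow_tendsto:
  assumes "\<And>i j. (\<lambda>n. X n $ i $ j) \<longlonglongrightarrow> L $ i $ j"
  shows "(\<lambda>n. mpow (X n) k $ i $ j) \<longlonglongrightarrow> mpow L k $ i $ j"
proof (induction k arbitrary: i j)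
  case 0 then show ?case by simp
next
  case (Suc k) then show ?case by (simp add: mm_tendsto assms)
qed

context mg1 begin

definition F :: "real^'m^'m \<Rightarrow> real^'m^'m" where
  "F X = (\<Sum>k. A k ** mpow X k)"

lemma G_solves: "nonneg_mat G" "summable (\<lambda>k. A k ** mpow G k)" "G = (\<Sum>k. A k ** mpow G k)"
  using G_min unfolding minimal_G_def solves_G_def by auto

lemma F_sub: "sub X \<Longrightarrow> sub (F X)"
  unfolding F_def by (intro AP_sub mpow_sub)

lemma F_entry: "sub X \<Longrightarrow> F X $ i $ j = (\<Sum>k. (A k ** mpow X k) $ i $ j)"
  unfolding F_def by (intro AP_summable(2) mpow_sub)

lemma F_mono_gen:
  assumes "sub X" "nonneg_mat Y" "mle X Y" "summable (\<lambda>k. A k ** mpow Y k)"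
  shows "F X $ i $ j \<le> (\<Sum>k. A k ** mpow Y k) $ i $ j"
proof -
  have "(\<Sum>k. (A k ** mpow X k) $ i $ j) \<le> (\<Sum>k. (A k ** mpow Y k) $ i $ j)"
  proof (rule suminf_le)
    show "(A k ** mpow X k) $ i $ j \<le> (A k ** mpow Y k) $ i $ j" for k
      using mle_mult[OF A_nonneg mpow_nonneg mle_refl mle_mpow[OF _ assms(3)]] assms(1)
      unfolding sub_def mle_def by blast
    show "summable (\<lambda>k. (A k ** mpow X k) $ i $ j)"
      by (intro AP_summable_entry mpow_sub assms)
    show "summable (\<lambda>k. (A k ** mpow Y k) $ i $ j)"
      by (intro summable_entry assms)
  qed
  then show ?thesis using F_entry[OF assms(1)] suminf_entry[OF assms(4)] by simp
qed

definition Xs :: "nat \<Rightarrow> real^'m^'m" where "Xs n = (F ^^ n) 0"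

lemma Xs_0: "Xs 0 = 0" and Xs_Suc: "Xs (Suc n) = F (Xs n)"
  by (simp_all add: Xs_def)

lemma sub_0: "sub (0::real^'m^'m)"
  by (simp add: sub_def nonneg_mat_def rs_def)

lemma Xs_sub: "sub (Xs n)"
  by (induction n) (simp_all add: Xs_0 Xs_Suc sub_0 F_sub)

lemma Xs_inc: "mle (Xs n) (Xs (Suc n))"
proof (induction n)
  case 0
  then show ?case using Xs_sub[of 1] by (simp add: Xs_0 mle_def sub_def nonneg_mat_def)
next
  case (Suc n)
  have "F (Xs n) $ i $ j \<le> F (Xs (Suc n)) $ i $ j" for i j
    using F_mono_gen[OF Xs_sub[of n] _ Suc AP_summable(1)[OF mpow_sub[OF Xs_sub[of "Suc n"]]]]
      Xs_sub[of "Suc n"] unfolding sub_def F_def by blast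
  then show ?case by (simp add: Xs_Suc mle_def)
qed

lemma Xs_le1: "Xs n $ i $ j \<le> 1" by (rule sub_entry_le1[OF Xs_sub])

definition Xl :: "real^'m^'m" where "Xl = (\<chi> i j. SUP n. Xs n $ i $ j)"

lemma Xs_bdd: "bdd_above (range (\<lambda>n. Xs n $ i $ j))"
  using Xs_le1 by (intro bdd_aboveI[of _ 1]) auto

lemma Xs_incseq: "incseq (\<lambda>n. Xs n $ i $ j)"
  by (rule incseq_SucI) (use Xs_inc in \<open>auto simp: mle_def\<close>)

lemma Xs_tendsto: "(\<lambda>n. Xs n $ i $ j) \<longlonglongrightarrow> Xl $ i $ j"
  unfolding Xl_def using LIMSEQ_incseq_SUP[OF Xs_bdd Xs_incseq] by simp

lemma Xs_le_Xl: "Xs n $ i $ j \<le> Xl $ i $ j"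
  unfolding Xl_def using cSUP_upper[OF _ Xs_bdd] by simp

lemma Xl_sub: "sub Xl"
proof -
  have "0 \<le> Xl $ i $ j" for i j
    using Xs_le_Xl[of 0 i j] Xs_sub[of 0] unfolding sub_def nonneg_mat_def by (meson order_trans)
  moreover have "rs Xl i \<le> 1" for i
  proof -
    have "(\<lambda>n. rs (Xs n) i) \<longlonglongrightarrow> rs Xl i" unfolding rs_def
      by (intro tendsto_sum Xs_tendsto)
    then show ?thesis
      by (rule LIMSEQ_le_const2) (use Xs_sub in \<open>auto simp: sub_def\<close>)
  qed
  ultimately show ?thesis unfolding sub_def nonneg_mat_def by blast
qed

lemma Xl_fix: "F Xl = Xl"
proof -
  have le: "F Xl $ i $ j \<le> Xl $ i $ j" for i j
  proof -
    let ?t = "\<lambda>X k. (A k ** mpow X k) $ i $ j"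
    have "(\<Sum>k. ?t Xl k) \<le> Xl $ i $ j"
    proof (rule suminf_le_const)
      show "summable (?t Xl)" by (intro AP_summable_entry mpow_sub Xl_sub)
      fix K
      have "(\<lambda>n. \<Sum>k<K. ?t (Xs n) k) \<longlonglongrightarrow> (\<Sum>k<K. ?t Xl k)"
      proof (rule tendsto_sum)
        fix k
        show "(\<lambda>n. ?t (Xs n) k) \<longlonglongrightarrow> ?t Xl k"
          by (rule mm_tendsto) (rule tendsto_const, rule mpow_tendsto, rule Xs_tendsto)
      qed
      moreover have "(\<Sum>k<K. ?t (Xs n) k) \<le> Xl $ i $ j" for n
      proof -
        have "(\<Sum>k<K. ?t (Xs n) k) \<le> (\<Sum>k. ?t (Xs n) k)"
          by (intro sum_le_suminf AP_summable_entry mpow_sub Xs_sub)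
             (auto intro: AP_entry_bounds mpow_sub Xs_sub)
        also have "\<dots> = Xs (Suc n) $ i $ j" using F_entry[OF Xs_sub] Xs_Suc by simp
        also have "\<dots> \<le> Xl $ i $ j" by (rule Xs_le_Xl)
        finally show ?thesis .
      qed
      ultimately show "(\<Sum>k<K. ?t Xl k) \<le> Xl $ i $ j"
        by (intro LIMSEQ_le_const2) auto
    qed
    then show ?thesis using F_entry[OF Xl_sub] by simp
  qed
  have ge: "Xl $ i $ j \<le> F Xl $ i $ j" for i j
  proof -
    have "Xs n $ i $ j \<le> F Xl $ i $ j" for n
    proof (cases n)
      case 0
      then show ?thesis using F_sub[OF Xl_sub] by (simp add: Xs_0 sub_def nonneg_mat_def)
    next
      case (Suc n')
      have "mle (Xs n') Xl" using Xs_le_Xl by (simp add: mle_def)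
      then show ?thesis using F_mono_gen[OF Xs_sub _ _ AP_summable(1)[OF mpow_sub[OF Xl_sub]]]
        Xl_sub Suc Xs_Suc unfolding sub_def F_def by auto
    qed
    then show ?thesis unfolding Xl_def by (simp add: cSUP_least)
  qed
  show ?thesis using le ge by (simp add: vec_eq_iff order_antisym)
qed

lemma G_sub: "sub G"
proof -
  have "solves_G A Xl" unfolding solves_G_def
    using Xl_sub Xl_fix AP_summable(1)[OF mpow_sub[OF Xl_sub]] unfolding sub_def F_def by auto
  then have le: "G $ i $ j \<le> Xl $ i $ j" for i j using G_min unfolding minimal_G_def by blast
  have "rs G i \<le> rs Xl i" for i unfolding rs_def by (intro sum_mono le)
  then show ?thesis using Xl_sub G_solves(1) unfolding sub_def by (meson order_trans)
qed

end



lemma mm_diff_right: "((X::'a::comm_ring_1^'m^'m) - Y) ** Z = X ** Z - Y ** Z"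
  by (simp add: vec_eq_iff mm_entry sum_subtractf left_diff_distrib)

lemma mm_diff_left: "(Z::'a::comm_ring_1^'m^'m) ** (X - Y) = Z ** X - Z ** Y"
  by (simp add: vec_eq_iff mm_entry sum_subtractf right_diff_distrib)

lemma suminf_mm_right:
  fixes g :: "nat \<Rightarrow> 'a::{real_normed_field,banach}^'m^'m"
  assumes "summable g"
  shows "summable (\<lambda>n. g n ** C)" "(\<Sum>n. g n ** C) = (\<Sum>n. g n) ** C"
proof -
  have "(\<lambda>n. (g n ** C) $ i $ j) sums (((\<Sum>n. g n) ** C) $ i $ j)" for i j
    unfolding mm_entry
    by (intro sums_sum sums_mult2) (simp add: suminf_entry[OF assms] summable_sums summable_entry[OF assms])
  then have "(\<lambda>n. g n ** C) sums ((\<Sum>n. g n) ** C)" by (rule mat_sums)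
  then show "summable (\<lambda>n. g n ** C)" "(\<Sum>n. g n ** C) = (\<Sum>n. g n) ** C"
    by (auto simp: sums_iff)
qed

lemma suminf_mm_left:
  fixes g :: "nat \<Rightarrow> 'a::{real_normed_field,banach}^'m^'m"
  assumes "summable g"
  shows "summable (\<lambda>n. C ** g n)" "(\<Sum>n. C ** g n) = C ** (\<Sum>n. g n)"
proof -
  have "(\<lambda>n. (C ** g n) $ i $ j) sums ((C ** (\<Sum>n. g n)) $ i $ j)" for i j
    unfolding mm_entry
    by (intro sums_sum sums_mult) (simp add: suminf_entry[OF assms] summable_sums summable_entry[OF assms])
  then have "(\<lambda>n. C ** g n) sums (C ** (\<Sum>n. g n))" by (rule mat_sums)
  then show "summable (\<lambda>n. C ** g n)" "(\<Sum>n. C ** g n) = C ** (\<Sum>n. g n)"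
    by (auto simp: sums_iff)
qed

context mg1 begin

abbreviation U where "U \<equiv> Umat A G"

lemma G_entry_le1: "mpow G n $ i $ j \<le> 1" "0 \<le> mpow G n $ i $ j"
  using sub_entry_le1[OF mpow_sub[OF G_sub]] mpow_sub[OF G_sub] unfolding sub_def nonneg_mat_def
  by auto

lemma rsA_shift_summable: "summable (\<lambda>n. rs (A (n + k + 1)) i)"
  using summable_ignore_initial_segment[OF rsA_summable[of i], of "k+1"] by (simp add: add.assoc)

lemma U_term_bounds: "0 \<le> (A (n + k + 1) ** mpow G n) $ i $ j"
  "(A (n + k + 1) ** mpow G n) $ i $ j \<le> rs (A (n + k + 1)) i"
  using AP_entry_bounds[OF mpow_sub[OF G_sub]] by auto

lemma U_summable_entry: "summable (\<lambda>n. (A (n + k + 1) ** mpow G n) $ i $ j)"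
  by (rule summable_comparison_test'[OF rsA_shift_summable[of k i]]) (use U_term_bounds in auto)

lemma U_summable: "summable (\<lambda>n. A (n + k + 1) ** mpow G n)"
  and U_entry: "U k $ i $ j = (\<Sum>n. (A (n + k + 1) ** mpow G n) $ i $ j)"
  using summable_from_entries[OF U_summable_entry] unfolding Umat_def by auto

lemma U_nonneg: "0 \<le> U k $ i $ j"
  unfolding U_entry by (intro suminf_nonneg U_summable_entry U_term_bounds)

lemma U_le: "U k $ i $ j \<le> (\<Sum>n. rs (A (n + k + 1)) i)"
  unfolding U_entry by (intro suminf_le U_summable_entry rsA_shift_summable U_term_bounds)

lemma U_rec: "U k = A (Suc k) + U (Suc k) ** G"
proof -
  let ?f = "\<lambda>n. A (n + k + 1) ** mpow G n"
  have "(\<Sum>n. ?f (Suc n)) = (\<Sum>n. ?f n) - ?f 0" by (rule suminf_split_head[OF U_summable])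
  moreover have "?f (Suc n) = (A (n + Suc k + 1) ** mpow G n) ** G" for n
    by (subst mpow_Suc_right) (simp add: matrix_mul_assoc)
  moreover have "(\<Sum>n. (A (n + Suc k + 1) ** mpow G n) ** G) = U (Suc k) ** G"
    unfolding Umat_def by (rule suminf_mm_right(2)[OF U_summable])
  ultimately show ?thesis unfolding Umat_def by simp
qed

definition P0 :: "nat \<Rightarrow> real^'m^'m" where "P0 m = (case m of 0 \<Rightarrow> 0 | Suc n \<Rightarrow> mpow G n)"

lemma P0_sub: "sub (P0 m)"
  by (cases m) (auto simp: P0_def sub_0 mpow_sub G_sub)

lemma U0_AP: "U 0 = (\<Sum>m. A m ** P0 m)"
proof -
  have "(\<Sum>m. A (Suc m) ** P0 (Suc m)) = (\<Sum>m. A m ** P0 m) - A 0 ** P0 0"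
    by (rule suminf_split_head[OF AP_summable(1)[OF P0_sub]])
  then show ?thesis unfolding Umat_def by (simp add: P0_def)
qed

lemma G_rec: "G = A 0 + U 0 ** G"
proof -
  let ?f = "\<lambda>k. A k ** mpow G k"
  have "(\<Sum>n. ?f (Suc n)) = (\<Sum>n. ?f n) - ?f 0" by (rule suminf_split_head[OF G_solves(2)])
  moreover have "?f (Suc n) = (A (n + 0 + 1) ** mpow G n) ** G" for n
    by (subst mpow_Suc_right) (simp add: matrix_mul_assoc)
  moreover have "(\<Sum>n. (A (n + 0 + 1) ** mpow G n) ** G) = U 0 ** G"
    unfolding Umat_def by (rule suminf_mm_right(2)[OF U_summable])
  ultimately show ?thesis using G_solves(3) by (simp add: algebra_simps)
qed

lemma WG: "(mat 1 - U 0) ** G = A 0"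
  using G_rec by (simp add: mm_diff_right algebra_simps)

lemma Gpow_AP: "mpow G (Suc n) = (\<Sum>m. A m ** mpow G (m + n))"
proof -
  have "mpow G (Suc n) = G ** mpow G n" by simp
  also have "\<dots> = (\<Sum>m. A m ** mpow G m) ** mpow G n" using G_solves(3) by simp
  also have "\<dots> = (\<Sum>m. (A m ** mpow G m) ** mpow G n)"
    by (rule suminf_mm_right(2)[OF G_solves(2), symmetric])
  also have "\<dots> = (\<Sum>m. A m ** mpow G (m + n))"
    by (simp add: mpow_add matrix_mul_assoc)
  finally show ?thesis .
qed

end



context mg1 begin

lemma U0_closed:
  fixes v :: "real^'m"
  assumes v: "U 0 *v v = v" and M: "\<And>j. \<bar>v $ j\<bar> \<le> M" and i: "\<bar>v $ i\<bar> = M" and Mpos: "M > 0"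
  shows "rs (U 0) i = 1" "\<And>j. U 0 $ i $ j > 0 \<Longrightarrow> \<bar>v $ j\<bar> = M"
proof -
  have sub0: "sub (U 0)" using AP_sub[OF P0_sub] U0_AP by simp
  have "(U 0 *v v) $ i = v $ i" using v by simp
  then have e: "v $ i = (\<Sum>j\<in>UNIV. U 0 $ i $ j * v $ j)" by (simp add: matrix_vector_mult_def)
  have "M = \<bar>\<Sum>j\<in>UNIV. U 0 $ i $ j * v $ j\<bar>"
    using i e by simp
  also have "\<dots> \<le> (\<Sum>j\<in>UNIV. U 0 $ i $ j * \<bar>v $ j\<bar>)"
    by (rule order_trans[OF sum_abs]) (simp add: abs_mult U_nonneg)
  finally have 1: "M \<le> (\<Sum>j\<in>UNIV. U 0 $ i $ j * \<bar>v $ j\<bar>)" .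
  have 2: "(\<Sum>j\<in>UNIV. U 0 $ i $ j * \<bar>v $ j\<bar>) \<le> (\<Sum>j\<in>UNIV. U 0 $ i $ j * M)"
    by (intro sum_mono mult_left_mono M U_nonneg)
  have 3: "(\<Sum>j\<in>UNIV. U 0 $ i $ j * M) = rs (U 0) i * M"
    unfolding rs_def by (simp add: sum_distrib_right)
  have 4: "rs (U 0) i \<le> 1" using sub0 unfolding sub_def by blast
  from 1 2 3 4 Mpos show r1: "rs (U 0) i = 1"
    by (smt (verit, ccfv_SIG) mult_le_cancel_right1)
  have "(\<Sum>j\<in>UNIV. U 0 $ i $ j * (M - \<bar>v $ j\<bar>)) = 0"
    using 1 2 3 r1 by (simp add: right_diff_distrib sum_subtractf)
  then have "\<forall>j\<in>UNIV. U 0 $ i $ j * (M - \<bar>v $ j\<bar>) = 0"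
    by (subst sum_nonneg_eq_0_iff[symmetric]) (auto intro!: mult_nonneg_nonneg U_nonneg simp: M)
  then show "\<And>j. U 0 $ i $ j > 0 \<Longrightarrow> \<bar>v $ j\<bar> = M" by (metis UNIV_I mult_eq_0_iff less_irrefl eq_iff_diff_eq_0)
qed

lemma rs_zero: "rs (0::real^'m^'m) i = 0" by (simp add: rs_def)

lemma rs_id: "rs (mat 1::real^'m^'m) i = 1" by (simp add: rs_def mat_def sum.delta)

lemma W_ker:
  fixes B0 :: "real^'n^'n" and B :: "nat \<Rightarrow> real^'m^'n" and C0 :: "real^'n^'m"
  assumes T: "irreducible_T A B0 B C0" and Wv: "(mat 1 - U 0) *v v = 0"
  shows "v = 0"
proof (rule ccontr)
  assume vnz: "v \<noteq> 0"
  have v: "U 0 *v v = v" using Wv by (simp add: matrix_vector_mult_diff_rdistrib)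
  define M where "M = Max (range (\<lambda>j. \<bar>v $ j\<bar>))"
  have Mge: "\<bar>v $ j\<bar> \<le> M" for j unfolding M_def by (rule Max_ge) auto
  have "M \<in> range (\<lambda>j. \<bar>v $ j\<bar>)" unfolding M_def by (rule Max_in) auto
  then obtain i0 where i0: "\<bar>v $ i0\<bar> = M" by auto
  obtain j0 where "v $ j0 \<noteq> 0" using vnz by (metis vec_eq_iff zero_index)
  then have Mpos: "M > 0" using Mge[of j0] by linarith
  define S where "S = {j. \<bar>v $ j\<bar> = M}"
  have S1: "rs (U 0) c = 1" if "c \<in> S" for c using U0_closed[OF v Mge _ Mpos] that S_def by auto
  have S2: "b \<in> S" if "c \<in> S" "U 0 $ c $ b > 0" for b c
    using U0_closed(2)[OF v Mge _ Mpos] that S_def by auto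
  define good where "good n c \<longleftrightarrow> rs (mpow G n) c = 1 \<and> (\<forall>b. mpow G n $ c $ b > 0 \<longrightarrow> b \<in> S)" for n c
  define Inv where "Inv s \<longleftrightarrow> (\<exists>l c. s = Inr (l, c) \<and> 2 \<le> l \<and> (if l = 2 then c \<in> S else good (l - 2) c))"
    for s :: "'n + nat \<times> 'm"
  have step: "Inv t" if "Inv s" "Tmat A B0 B C0 s t > 0" for s t
  proof -
    obtain l c where s: "s = Inr (l, c)" "2 \<le> l" and sc: "if l = 2 then c \<in> S else good (l - 2) c"
      using \<open>Inv s\<close> unfolding Inv_def by blast
    show ?thesis
    proof (cases t)
      case (Inl x)
      then show ?thesis using that(2) s by (simp add: Tmat_def)
    next
      case (Inr p)
      then obtain l' c' where t: "t = Inr (l', c')" by (cases p) auto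
      have le: "l \<le> l' + 1" and Apos: "A (l' + 1 - l) $ c $ c' > 0"
        using that(2) s t by (auto simp: Tmat_def split: if_splits)
      define m where "m = l' + 1 - l"
      have l': "l' = l + m - 1" using le m_def by simp
      show ?thesis
      proof (cases "l = 2")
        case True
        then have cS: "c \<in> S" using sc by simp
        have rsU: "rs (\<Sum>m. A m ** P0 m) c = 1" using S1[OF cS] U0_AP by simp
        have rsP: "rs (P0 m) c' = 1" using AP_defect[OF P0_sub rsU] Apos m_def by simp
        then obtain n where mn: "m = Suc n" by (cases m) (auto simp: P0_def rs_zero)
        have rsG: "rs (mpow G n) c' = 1" using rsP mn by (simp add: P0_def)
        have bS: "b \<in> S" if "mpow G n $ c' $ b > 0" for b
        proof -
          have "P0 m $ c' $ b > 0" using that mn by (simp add: P0_def)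
          then have "(\<Sum>m. A m ** P0 m) $ c $ b > 0"
            using AP_pos[of P0, OF P0_sub] Apos m_def by blast
          then show ?thesis using S2[OF cS] U0_AP by simp
        qed
        show ?thesis
        proof (cases "n = 0")
          case True
          have "c' \<in> S" using bS[of c'] True by (simp add: mat_def)
          then show ?thesis using t l' True mn \<open>l = 2\<close> unfolding Inv_def by auto
        next
          case False
          have "good n c'" using rsG bS unfolding good_def by blast
          then show ?thesis using t l' False mn \<open>l = 2\<close> unfolding Inv_def by auto
        qed
      next
        case False
        then obtain n' where ln: "l - 2 = Suc n'" using s(2) by (cases "l - 2") auto
        have g: "good (Suc n') c" using sc False ln by simp
        have rsG1: "rs (\<Sum>m. A m ** mpow G (m + n')) c = 1"
          using g Gpow_AP[of n'] unfolding good_def by simp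
        have sP: "\<And>k. sub (mpow G (k + n'))" by (rule mpow_sub[OF G_sub])
        have rsG: "rs (mpow G (m + n')) c' = 1"
          using AP_defect[where P="\<lambda>k. mpow G (k + n')" and m=m and c'=c', OF sP rsG1] Apos m_def by simp
        have bS: "b \<in> S" if "mpow G (m + n') $ c' $ b > 0" for b
        proof -
          have "(\<Sum>m. A m ** mpow G (m + n')) $ c $ b > 0"
            using AP_pos[where P="\<lambda>k. mpow G (k + n')" and m=m and c=c and c'=c' and b=b, OF sP] Apos m_def that by blast
          then have "mpow G (Suc n') $ c $ b > 0" using Gpow_AP[of n'] by simp
          then show ?thesis using g unfolding good_def by blast
        qed
        have l'2: "l' - 2 = m + n'" using l' ln False s(2) by simp
        show ?thesis
        proof (cases "m + n' = 0")
          case True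
          have "c' \<in> S" using bS[of c'] True by (simp add: mat_def)
          then show ?thesis using t l'2 True l' ln unfolding Inv_def by auto
        next
          case False
          have "good (m + n') c'" using rsG bS unfolding good_def by blast
          then show ?thesis using t l'2 False l' ln unfolding Inv_def by auto
        qed
      qed
    qed
  qed
  let ?R = "{(u, v). valid_state u \<and> valid_state v \<and> Tmat A B0 B C0 u v > 0}"
  have reach: "Inv t" if "(s, t) \<in> ?R\<^sup>*" "Inv s" for s t
    using that by (induction rule: rtrancl_induct) (auto intro: step)
  have vs: "valid_state (Inr (2, i0) :: 'n + nat \<times> 'm)" "valid_state (Inl undefined :: 'n + nat \<times> 'm)"
    by (auto simp: valid_state_def)
  have "(Inr (2, i0), Inl undefined) \<in> ?R\<^sup>*"
    using T vs unfolding irreducible_T_def by blast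
  moreover have "Inv (Inr (2, i0) :: 'n + nat \<times> 'm)" unfolding Inv_def S_def using i0 by auto
  ultimately have "Inv (Inl undefined :: 'n + nat \<times> 'm)" by (rule reach)
  then show False unfolding Inv_def by auto
qed

lemma W_invertible:
  fixes B0 :: "real^'n^'n" and B :: "nat \<Rightarrow> real^'m^'n" and C0 :: "real^'n^'m"
  assumes T: "irreducible_T A B0 B C0"
  shows "matrix_inv (mat 1 - U 0) ** (mat 1 - U 0) = mat 1"
    "(mat 1 - U 0) ** matrix_inv (mat 1 - U 0) = mat 1"
proof -
  have "\<exists>B'. B' ** (mat 1 - U 0) = mat 1"
    unfolding matrix_left_invertible_ker using W_ker[OF T] by blast
  then have "invertible (mat 1 - U 0)" using invertible_left_inverse by blast
  then show "matrix_inv (mat 1 - U 0) ** (mat 1 - U 0) = mat 1"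
    "(mat 1 - U 0) ** matrix_inv (mat 1 - U 0) = mat 1"
    unfolding invertible_def matrix_inv_def by (metis (mono_tags, lifting) someI_ex)+
qed

end



lemma tail_le: fixes b :: "nat \<Rightarrow> real"
  assumes "summable b" "\<And>n. 0 \<le> b n" shows "(\<Sum>n. b (n + k)) \<le> suminf b"
  using suminf_split_initial_segment[OF assms(1), of k] sum_nonneg[of "{..<k}" b] assms(2) by simp

lemma entry_le_norm: "\<bar>(X::real^'n^'m) $ i $ j\<bar> \<le> norm X"
  using component_le_norm_cart[where x="X $ i" and i=j] Finite_Cartesian_Product.norm_nth_le[where x=X and i=i] by linarith

context mg1 begin

lemma rs_le_norm: "rs (A m) i \<le> real CARD('m) * norm (A m)"
proof -
  have "rs (A m) i \<le> (\<Sum>j\<in>(UNIV::'m set). norm (A m))" unfolding rs_def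
    by (intro sum_mono) (use entry_le_norm in \<open>auto simp: abs_le_iff\<close>)
  then show ?thesis by simp
qed

lemma conv_setup:
  assumes "1 < cmod z" "ereal (cmod z) < conv_radius A"
  obtains r' where "cmod z < r'" "summable (\<lambda>n. norm (A n) * r' ^ n)"
proof -
  obtain r' where r': "ereal (cmod z) < ereal r'" "ereal r' < conv_radius A"
    using ereal_dense2[OF assms(2)] by blast
  have r'pos: "r' > 0" using r'(1) assms(1) by simp
  have "ereal (norm r') < conv_radius (\<lambda>n. norm (A n))" using r' r'pos by simp
  from abs_summable_in_conv_radius[OF this] have "summable (\<lambda>n. norm (A n) * r' ^ n)"
    using r'pos by (simp add: abs_mult)
  then show ?thesis using that r' by simp
qed

lemma summable_A_z:
  assumes "1 < cmod z" "ereal (cmod z) < conv_radius A"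
  shows "summable (\<lambda>k. z ^ k * complex_of_real (A k $ i $ j))"
proof -
  obtain r' where r': "cmod z < r'" "summable (\<lambda>n. norm (A n) * r' ^ n)"
    using conv_setup[OF assms] by blast
  have r'0: "0 \<le> r'" using r'(1) norm_ge_zero[of z] by linarith
  have bnd: "norm (z ^ k * complex_of_real (A k $ i $ j)) \<le> norm (A k) * r' ^ k" for k
  proof -
    have "norm (z ^ k * complex_of_real (A k $ i $ j)) = cmod z ^ k * \<bar>A k $ i $ j\<bar>"
      by (simp add: norm_mult norm_power)
    also have "\<dots> \<le> r' ^ k * norm (A k)"
      by (intro mult_mono power_mono entry_le_norm) (use r' r'0 in auto)
    finally show ?thesis by (simp add: mult.commute)
  qed
  show ?thesis
    by (rule summable_norm_cancel, rule summable_comparison_test'[OF r'(2)]) (simp add: bnd)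
qed

lemma summable_U_z:
  assumes "1 < cmod z" "ereal (cmod z) < conv_radius A"
  shows "summable (\<lambda>k. z ^ k * complex_of_real (U k $ i $ j))"
proof -
  obtain r' where r': "cmod z < r'" "summable (\<lambda>n. norm (A n) * r' ^ n)"
    using conv_setup[OF assms] by blast
  define r where "r = cmod z"
  have r1: "1 < r" "r < r'" using assms r' r_def by auto
  define b where "b = (\<lambda>n. norm (A n) * r' ^ n)"
  define C where "C = real CARD('m)"
  define Bs where "Bs = suminf b"
  have bnn: "0 \<le> b n" for n using r1 by (simp add: b_def)
  have bs: "summable b" using r' b_def by simp
  have an_le: "norm (A n) \<le> b n" for n
  proof -
    have "1 \<le> r' ^ n" by (rule one_le_power) (use r1 in simp)
    then have "norm (A n) * 1 \<le> norm (A n) * r' ^ n" by (intro mult_left_mono) auto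
    then show ?thesis by (simp add: b_def)
  qed
  have key: "norm (z ^ k * complex_of_real (U k $ i $ j)) \<le> C * Bs * (r / r') ^ k" for k
  proof -
    have s1: "summable (\<lambda>n. b (n + k + 1))" using summable_ignore_initial_segment[OF bs, of "k+1"]
      by (simp add: add.assoc)
    have s2: "summable (\<lambda>n. norm (A (n + k + 1)))"
      by (rule summable_comparison_test'[OF s1]) (use an_le in auto)
    have "U k $ i $ j \<le> (\<Sum>n. rs (A (n + k + 1)) i)" by (rule U_le)
    also have "\<dots> \<le> (\<Sum>n. C * norm (A (n + k + 1)))"
      by (intro suminf_le rsA_shift_summable summable_mult s2) (simp add: C_def rs_le_norm)
    also have "\<dots> = C * (\<Sum>n. norm (A (n + k + 1)))" by (rule suminf_mult[OF s2])
    finally have u: "U k $ i $ j \<le> C * (\<Sum>n. norm (A (n + k + 1)))" .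
    have "r ^ k * (\<Sum>n. norm (A (n + k + 1))) = (\<Sum>n. r ^ k * norm (A (n + k + 1)))"
      by (rule suminf_mult[OF s2, symmetric])
    also have "\<dots> \<le> (\<Sum>n. (r / r') ^ k * b (n + k + 1))"
    proof (intro suminf_le summable_mult s2 s1)
      fix n
      have "r ^ k = (r / r') ^ k * r' ^ k" using r1 by (simp add: power_divide)
      also have "\<dots> \<le> (r / r') ^ k * r' ^ (n + k + 1)"
        using r1 by (intro mult_left_mono power_increasing) auto
      finally have "r ^ k * norm (A (n + k + 1)) \<le> (r / r') ^ k * r' ^ (n + k + 1) * norm (A (n + k + 1))"
        by (intro mult_right_mono) auto
      then show "r ^ k * norm (A (n + k + 1)) \<le> (r / r') ^ k * b (n + k + 1)"
        by (simp add: b_def mult_ac)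
    qed
    also have "\<dots> = (r / r') ^ k * (\<Sum>n. b (n + (k + 1)))"
      using suminf_mult[OF s1, of "(r / r') ^ k"] by (simp only: add.assoc)
    also have "\<dots> \<le> (r / r') ^ k * Bs"
      unfolding Bs_def using r1 by (intro mult_left_mono tail_le bs bnn) auto
    finally have t: "r ^ k * (\<Sum>n. norm (A (n + k + 1))) \<le> (r / r') ^ k * Bs" .
    have "norm (z ^ k * complex_of_real (U k $ i $ j)) = r ^ k * U k $ i $ j"
      by (simp add: norm_mult norm_power r_def U_nonneg)
    also have "\<dots> \<le> r ^ k * (C * (\<Sum>n. norm (A (n + k + 1))))"
      using u r1 by (intro mult_left_mono) auto
    also have "\<dots> = C * (r ^ k * (\<Sum>n. norm (A (n + k + 1))))" by simp
    also have "\<dots> \<le> C * ((r / r') ^ k * Bs)" using t by (intro mult_left_mono) (auto simp: C_def)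
    finally show ?thesis by (simp add: mult_ac)
  qed
  have geo: "summable (\<lambda>k. C * Bs * (r / r') ^ k)"
    using r1 by (intro summable_mult summable_geometric) auto
  show ?thesis
    by (rule summable_norm_cancel, rule summable_comparison_test'[OF geo]) (simp add: key)
qed

end



definition cm :: "real^'m^'m \<Rightarrow> complex^'m^'m" where
  "cm X = (\<chi> i j. complex_of_real (X $ i $ j))"

lemma cm_entry [simp]: "cm X $ i $ j = complex_of_real (X $ i $ j)"
  by (simp add: cm_def)

lemma cm_mult: "cm (X ** Y) = cm X ** cm Y"
  by (simp add: vec_eq_iff mm_entry)

lemma cm_one: "cm (mat 1) = mat 1"
  by (simp add: vec_eq_iff mat_def)

lemma det_IGz:
  fixes G :: "real^'m^'m" and z :: complex
  assumes G: "sub G" and z: "1 < cmod z"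
  shows "det (mat 1 - (\<chi> i j. complex_of_real (G $ i $ j) / z)) \<noteq> 0"
proof -
  let ?Gz = "(\<chi> i j. complex_of_real (G $ i $ j) / z) :: complex^'m^'m"
  have "x = 0" if x: "(mat 1 - ?Gz) *v x = 0" for x
  proof -
    have xe: "x = ?Gz *v x" using x by (simp add: matrix_vector_mult_diff_rdistrib)
    define M where "M = Max (range (\<lambda>j. cmod (x $ j)))"
    have Mge: "cmod (x $ j) \<le> M" for j unfolding M_def by (rule Max_ge) auto
    have "M \<in> range (\<lambda>j. cmod (x $ j))" unfolding M_def by (rule Max_in) auto
    then obtain i where i: "cmod (x $ i) = M" by auto
    have "x $ i = (?Gz *v x) $ i" using xe by (metis)
    then have "x $ i = (\<Sum>l\<in>UNIV. complex_of_real (G $ i $ l) * x $ l) / z"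
      by (simp add: matrix_vector_mult_def sum_divide_distrib)
    then have "z * x $ i = (\<Sum>l\<in>UNIV. complex_of_real (G $ i $ l) * x $ l)"
      using z by (auto simp: field_simps)
    then have "cmod z * M = cmod (\<Sum>l\<in>UNIV. complex_of_real (G $ i $ l) * x $ l)"
      using i by (metis norm_mult)
    also have "\<dots> \<le> (\<Sum>l\<in>UNIV. G $ i $ l * cmod (x $ l))"
      by (rule order_trans[OF norm_sum]) (use G in \<open>simp add: norm_mult sub_def nonneg_mat_def\<close>)
    also have "\<dots> \<le> (\<Sum>l\<in>UNIV. G $ i $ l * M)"
      by (intro sum_mono mult_left_mono Mge) (use G in \<open>auto simp: sub_def nonneg_mat_def\<close>)
    also have "\<dots> = rs G i * M" by (simp add: rs_def sum_distrib_right)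
    also have "\<dots> \<le> M"
    proof -
      have "0 \<le> M" using Mge[of i] norm_ge_zero[of "x $ i"] by linarith
      have "rs G i \<le> 1" using G unfolding sub_def by blast
      then have "rs G i * M \<le> 1 * M" using \<open>0 \<le> M\<close> by (rule mult_right_mono)
      then show ?thesis by simp
    qed
    finally have "cmod z * M \<le> M" .
    moreover have "0 \<le> M" using Mge[of i] norm_ge_zero[of "x $ i"] by linarith
    ultimately have "M = 0"
    proof -
      assume a: "cmod z * M \<le> M" "0 \<le> M"
      have "(cmod z - 1) * M \<le> 0" using a(1) by (simp add: algebra_simps)
      moreover have "cmod z - 1 > 0" using z by simp
      ultimately have "M \<le> 0" by (simp add: mult_le_0_iff)
      then show "M = 0" using a(2) by simp
    qed
    then show "x = 0" using Mge by (simp add: vec_eq_iff)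
  qed
  then have "\<exists>B'. B' ** (mat 1 - ?Gz) = mat 1" unfolding matrix_left_invertible_ker by blast
  then have "invertible (mat 1 - ?Gz)" using invertible_left_inverse by blast
  then show ?thesis using invertible_det_nz by blast
qed

context mg1 begin

lemma factorization:
  fixes B0 :: "real^'n^'n" and B :: "nat \<Rightarrow> real^'m^'n" and C0 :: "real^'n^'m"
  assumes T: "irreducible_T A B0 B C0" and z: "1 < cmod z" "ereal (cmod z) < conv_radius A"
  shows "det (mat 1 - GammaAstar A z) =
    det (mat 1 - Rstar A G z) * det (cm (mat 1 - U 0)) * det (mat 1 - (\<chi> i j. complex_of_real (G $ i $ j) / z))"
    "det (cm (mat 1 - U 0)) \<noteq> 0"
proof -
  define W where "W = mat 1 - U 0"
  define Wi where "Wi = matrix_inv W"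
  have WiW: "Wi ** W = mat 1" using W_invertible[OF T] unfolding W_def Wi_def by simp
  define V :: "complex^'m^'m" where "V = (\<chi> i j. \<Sum>k. z ^ Suc k * complex_of_real (U (Suc k) $ i $ j))"
  define Gz :: "complex^'m^'m" where "Gz = (\<chi> i j. complex_of_real (G $ i $ j) / z)"
  have znz: "z \<noteq> 0" using z by auto
  have sU: "summable (\<lambda>k. z ^ k * complex_of_real (U k $ i $ j))" for i j
    by (rule summable_U_z[OF z])
  have sU1: "summable (\<lambda>k. z ^ Suc k * complex_of_real (U (Suc k) $ i $ j))" for i j
    using summable_Suc_iff[where f="\<lambda>k. z ^ k * complex_of_real (U k $ i $ j)"] sU by simp
  have sA: "summable (\<lambda>k. z ^ k * complex_of_real (A k $ i $ j))" for i j
    by (rule summable_A_z[OF z])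
  have sA1: "summable (\<lambda>k. z ^ k * complex_of_real (A (Suc k) $ i $ j))" for i j
  proof -
    have "summable (\<lambda>k. z ^ Suc k * complex_of_real (A (Suc k) $ i $ j))"
      using summable_Suc_iff[where f="\<lambda>k. z ^ k * complex_of_real (A k $ i $ j)"] sA by simp
    then have "summable (\<lambda>k. (1 / z) * (z ^ Suc k * complex_of_real (A (Suc k) $ i $ j)))"
      by (rule summable_mult)
    then show ?thesis using znz by simp
  qed
  have C1: "Rstar A G z = V ** cm Wi"
  proof -
    have "Rstar A G z $ i $ j = (V ** cm Wi) $ i $ j" for i j
    proof -
      have "Rstar A G z $ i $ j =
          (\<Sum>k. \<Sum>l\<in>UNIV. z ^ Suc k * complex_of_real (U (Suc k) $ i $ l) * complex_of_real (Wi $ l $ j))"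
      proof -
        have "Rstar A G z $ i $ j = (\<Sum>k. z ^ Suc k * complex_of_real ((U (Suc k) ** Wi) $ i $ j))"
          by (simp add: Rstar_def Rmat_def Wi_def W_def)
        also have "\<dots> = (\<Sum>k. \<Sum>l\<in>UNIV. z ^ Suc k * complex_of_real (U (Suc k) $ i $ l) * complex_of_real (Wi $ l $ j))"
        proof (rule suminf_cong)
          fix k
          show "z ^ Suc k * complex_of_real ((U (Suc k) ** Wi) $ i $ j) =
            (\<Sum>l\<in>UNIV. z ^ Suc k * complex_of_real (U (Suc k) $ i $ l) * complex_of_real (Wi $ l $ j))"
            unfolding mm_entry of_real_sum sum_distrib_left by (simp add: mult.assoc)
        qed
        finally show ?thesis .
      qed
      also have "\<dots> = (\<Sum>l\<in>UNIV. \<Sum>k. z ^ Suc k * complex_of_real (U (Suc k) $ i $ l) * complex_of_real (Wi $ l $ j))"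
        by (rule suminf_sum) (intro summable_mult2 sU1)
      also have "\<dots> = (\<Sum>l\<in>UNIV. (\<Sum>k. z ^ Suc k * complex_of_real (U (Suc k) $ i $ l)) * complex_of_real (Wi $ l $ j))"
        by (intro sum.cong refl suminf_mult2[symmetric] sU1)
      also have "\<dots> = (V ** cm Wi) $ i $ j" by (simp add: V_def mm_entry)
      finally show ?thesis .
    qed
    then show ?thesis by (simp add: vec_eq_iff)
  qed
  have C2: "(mat 1 - Rstar A G z) ** cm W = cm W - V"
  proof -
    have "(mat 1 - Rstar A G z) ** cm W = cm W - V ** (cm Wi ** cm W)"
      by (simp add: C1 mm_diff_right matrix_mul_assoc)
    also have "cm Wi ** cm W = mat 1" using WiW by (simp add: cm_mult[symmetric] cm_one)
    finally show ?thesis by simp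
  qed
  have C3: "(cm W - V) ** (mat 1 - Gz) = mat 1 - GammaAstar A z"
  proof -
    have e: "((cm W - V) ** (mat 1 - Gz)) $ i $ j = (mat 1 - GammaAstar A z) $ i $ j" for i j
    proof -
      define SU where "SU = (\<Sum>k. z ^ k * complex_of_real (U k $ i $ j))"
      define SU1 where "SU1 = (\<Sum>k. z ^ Suc k * complex_of_real (U (Suc k) $ i $ j))"
      define SA where "SA = (\<Sum>k. z ^ k * complex_of_real (A k $ i $ j))"
      define SA1 where "SA1 = (\<Sum>k. z ^ k * complex_of_real (A (Suc k) $ i $ j))"
      have hU: "SU1 = SU - complex_of_real (U 0 $ i $ j)"
        unfolding SU1_def SU_def using suminf_split_head[OF sU[of i j]] by simp
      have hA: "SA = complex_of_real (A 0 $ i $ j) + z * SA1"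
      proof -
        have "(\<Sum>k. z ^ Suc k * complex_of_real (A (Suc k) $ i $ j)) = SA - complex_of_real (A 0 $ i $ j)"
          unfolding SA_def using suminf_split_head[OF sA[of i j]] by simp
        moreover have "(\<Sum>k. z ^ Suc k * complex_of_real (A (Suc k) $ i $ j)) = z * SA1"
          unfolding SA1_def using suminf_mult[OF sA1[of i j], of z] by (simp add: mult.assoc)
        ultimately show ?thesis by (metis add.commute diff_add_cancel)
      qed
      have WG': "(cm W ** Gz) $ i $ j = complex_of_real (A 0 $ i $ j) / z"
      proof -
        have "(cm W ** Gz) $ i $ j = complex_of_real ((W ** G) $ i $ j) / z"
          by (simp add: Gz_def mm_entry sum_divide_distrib)
        then show ?thesis using WG unfolding W_def by simp
      qed
      have VG: "(V ** Gz) $ i $ j = SU - SA1"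
      proof -
        have "(V ** Gz) $ i $ j =
            (\<Sum>l\<in>UNIV. (\<Sum>k. z ^ Suc k * complex_of_real (U (Suc k) $ i $ l)) * (complex_of_real (G $ l $ j) / z))"
          by (simp add: V_def Gz_def mm_entry)
        also have "\<dots> = (\<Sum>l\<in>UNIV. \<Sum>k. z ^ Suc k * complex_of_real (U (Suc k) $ i $ l) * (complex_of_real (G $ l $ j) / z))"
          by (intro sum.cong refl suminf_mult2 sU1)
        also have "\<dots> = (\<Sum>k. \<Sum>l\<in>UNIV. z ^ Suc k * complex_of_real (U (Suc k) $ i $ l) * (complex_of_real (G $ l $ j) / z))"
          by (rule suminf_sum[symmetric]) (intro summable_mult2 sU1)
        also have "\<dots> = (\<Sum>k. z ^ k * complex_of_real ((U (Suc k) ** G) $ i $ j))"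
          by (intro suminf_cong) (simp add: mm_entry sum_distrib_left znz field_simps)
        also have "\<dots> = (\<Sum>k. z ^ k * complex_of_real (U k $ i $ j) - z ^ k * complex_of_real (A (Suc k) $ i $ j))"
        proof (intro suminf_cong)
          fix k
          have "U k $ i $ j = A (Suc k) $ i $ j + (U (Suc k) ** G) $ i $ j"
            using arg_cong[OF U_rec[of k], of "\<lambda>X. X $ i $ j"] by simp
          then show "z ^ k * complex_of_real ((U (Suc k) ** G) $ i $ j) =
              z ^ k * complex_of_real (U k $ i $ j) - z ^ k * complex_of_real (A (Suc k) $ i $ j)"
            by (simp add: algebra_simps)
        qed
        also have "\<dots> = SU - SA1" unfolding SU_def SA1_def by (rule suminf_diff[OF sU sA1, symmetric])
        finally show ?thesis .
      qed
      have E: "((cm W - V) ** (mat 1 - Gz)) $ i $ j = cm W $ i $ j - (cm W ** Gz) $ i $ j - V $ i $ j + (V ** Gz) $ i $ j"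
      proof -
        have "((cm W - V) ** (mat 1 - Gz)) = cm W - cm W ** Gz - V + V ** Gz"
          by (simp add: mm_diff_left mm_diff_right)
        then show ?thesis by simp
      qed
      define d where "d = (if i = j then 1 else 0 :: complex)"
      have cW: "cm W $ i $ j = d - complex_of_real (U 0 $ i $ j)" by (simp add: W_def mat_def d_def)
      have Vij: "V $ i $ j = SU1" by (simp add: V_def SU1_def)
      have "((cm W - V) ** (mat 1 - Gz)) $ i $ j =
          d - complex_of_real (U 0 $ i $ j) - complex_of_real (A 0 $ i $ j) / z - SU1 + (SU - SA1)"
        unfolding E cW Vij WG' VG ..
      also have "\<dots> = d - SA / z"
      proof -
        have "SA / z = complex_of_real (A 0 $ i $ j) / z + SA1" using hA znz by (simp add: field_simps)
        have alg: "\<And>d u q s t :: complex. d - u - q - (s - u) + (s - t) = d - (q + t)" by simp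
        show ?thesis unfolding hU \<open>SA / z = _\<close> by (rule alg)
      qed
      also have "\<dots> = (mat 1 - GammaAstar A z) $ i $ j"
        by (simp add: GammaAstar_def Astar_def SA_def d_def mat_def)
      finally show ?thesis .
    qed
    then show ?thesis by (simp add: vec_eq_iff)
  qed
  have dW: "det (cm W) \<noteq> 0"
  proof -
    have "det (cm Wi) * det (cm W) = det (cm Wi ** cm W)" by (rule det_mul[symmetric])
    also have "cm Wi ** cm W = mat 1" by (metis WiW cm_mult cm_one)
    finally have "det (cm Wi) * det (cm W) = 1" by simp
    then show ?thesis by auto
  qed
  then show "det (cm (mat 1 - U 0)) \<noteq> 0" by (simp add: W_def)
  have "det (mat 1 - GammaAstar A z) = det ((cm W - V) ** (mat 1 - Gz))" using C3 by simp
  also have "\<dots> = det (cm W - V) * det (mat 1 - Gz)" by (rule det_mul)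
  also have "det (cm W - V) = det ((mat 1 - Rstar A G z) ** cm W)" using C2 by simp
  also have "\<dots> = det (mat 1 - Rstar A G z) * det (cm W)" by (rule det_mul)
  finally show "det (mat 1 - GammaAstar A z) =
    det (mat 1 - Rstar A G z) * det (cm (mat 1 - U 0)) * det (mat 1 - (\<chi> i j. complex_of_real (G $ i $ j) / z))"
    by (simp add: W_def Gz_def)
qed

end

theorem proposition2p3:
  fixes A :: "nat \<Rightarrow> real^'m^'m"
    and B0 :: "real^'n^'n"
    and B :: "nat \<Rightarrow> real^'m^'n"
    and C0 :: "real^'n^'m"
    and G :: "real^'m^'m"
    and z :: complex
  assumes A_nonneg: "\<And>k. nonneg_mat (A k)"
    and B0_nonneg: "nonneg_mat B0"
    and B_nonneg: "\<And>k. 1 \<le> k \<Longrightarrow> nonneg_mat (B k)"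
    and C0_nonneg: "nonneg_mat C0"
    and A_summable: "summable A"
    and A_stochastic: "\<And>i. (\<Sum>j\<in>UNIV. (\<Sum>k. A k) $ i $ j) = 1"
    and B_summable: "summable (\<lambda>k. B (Suc k))"
    and B_rows: "\<And>i. (\<Sum>j\<in>UNIV. B0 $ i $ j) + (\<Sum>j\<in>UNIV. (\<Sum>k. B (Suc k)) $ i $ j) = 1"
    and C0_rows: "\<And>j. (\<Sum>i\<in>UNIV. C0 $ j $ i) = (\<Sum>j'\<in>UNIV. A 0 $ j $ j')"
    and T_irred: "irreducible_T A B0 B C0"
    and A_irred: "irreducible_mat (\<Sum>k. A k)"
    and rA: "conv_radius A > 1"
    and G_def: "minimal_G A G"
    and z_low: "1 < cmod z"
    and z_high: "ereal (cmod z) < conv_radius A"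
  shows "det (mat 1 - GammaAstar A z) = 0 \<longleftrightarrow> det (mat 1 - Rstar A G z) = 0"
proof -
  interpret mg1 A G
    using A_nonneg A_summable A_stochastic G_def by unfold_locales
  note f = factorization[OF T_irred z_low z_high]
  have "det (mat 1 - (\<chi> i j. complex_of_real (G $ i $ j) / z)) \<noteq> 0"
    by (rule det_IGz[OF G_sub z_low])
  then show ?thesis using f by simp
qed



end
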